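(* Let $M$ be a commutative and cocommutative Hopf algebra over $\mathbb{C}$, let $A$ be a commutative $\mathbb{C}$-algebra, let $r$ be an $A$-valued bicharacter on $M$, and let $s=r\circ r^{t}$ be its symmetrization. Then for all $a,b\in M$, \[ \mathrm{EQ}_{r}(ab)=\mathrm{EQ}_{r}(a)\bullet_{s}\mathrm{EQ}_{r}(b). \] In other words, $\mathrm{EQ}_r$ is a homomorphism from $(M\otimes A,\cdot)$ to $(M\otimes A,\bullet_s)$.
   Context: For a Hopf algebra $M$ with coproduct $\Delta$, counit $\eta$ and antipode $S$, Sweedler notation is used: $\Delta(a)=\sum a'\otimes a''$, $\Delta^2(a)=\sum a'\otimes a''\otimes a'''$ (summation signs omitted). An $A$-valued bicharacter on $M$ is a linear map $r:M\otimes M\to A$ such that for all $a,b,c\in M$: $r(1\otimes a)=\eta(a)=r(a\otimes 1)$, $r(ab\otimes c)=\sum r(a\otimes c')r(b\otimes c'')$, and $r(a\otimes bc)=\sum r(a'\otimes b)r(a''\otimes c)$. The convolution of bicharacters is $(r\circ t)(a\otimes b)=\sum r(a'\otimes b')t(a''\otimes b'')$, and $r^{t}(a\otimes b)=r(b\otimes a)$. A bicharacter $t$ is symmetric if $t=t^t$. The symmetrization of $r$ is $s=r\circ r^t$, i.e. $s(a\otimes b)=\sum r(a'\otimes b')r(b''\otimes a'')$. Write $M_A=M\otimes_{\mathbb{C}}A$ with the $A$-linear extension of the product of $M$. For a symmetric bicharacter $t$, the product $\bullet_t$ on $M_A$ is the $A$-bilinear extension of $a\bullet_t b=\sum a'b'\,t(a''\otimes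 b'')$ for $a,b\in M$. The map $\mathrm{EQ}_r:M\to M_A$ is $\mathrm{EQ}_r(m)=\sum r(m'\otimes m'')m'''$, extended $A$-linearly to $M_A$. *)

theory Defs
  imports Complex_Main
begin

text \<open>A complex algebra structure on a ring: a ring homomorphism from the complex
numbers into the centre; scalar multiplication c.x is iota c * x.\<close>
definition calg :: "(complex \<Rightarrow> 'a::ring_1) \<Rightarrow> bool" where
  "calg \<iota> \<longleftrightarrow> \<iota> 1 = 1 \<and> (\<forall>c d. \<iota> (c + d) = \<iota> c + \<iota> d)
     \<and> (\<forall>c d. \<iota> (c * d) = \<iota> c * \<iota> d) \<and> (\<forall>c x. \<iota> c * x = x * \<iota> c)"

definition clin :: "(complex \<Rightarrow> 'a::ring_1) \<Rightarrow> (complex \<Rightarrow> 'b::ring_1) \<Rightarrow> ('a \<Rightarrow> 'b) \<Rightarrow> bool" where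
  "clin \<iota>a \<iota>b f \<longleftrightarrow> (\<forall>x y. f (x + y) = f x + f y) \<and> (\<forall>c x. f (\<iota>a c * x) = \<iota>b c * f x)"

definition cbilin :: "(complex \<Rightarrow> 'a::ring_1) \<Rightarrow> (complex \<Rightarrow> 'b::ring_1) \<Rightarrow> (complex \<Rightarrow> 'c::ring_1)
    \<Rightarrow> ('a \<Rightarrow> 'b \<Rightarrow> 'c) \<Rightarrow> bool" where
  "cbilin \<iota>1 \<iota>2 \<iota>3 f \<longleftrightarrow> (\<forall>y. clin \<iota>1 \<iota>3 (\<lambda>x. f x y)) \<and> (\<forall>x. clin \<iota>2 \<iota>3 (f x))"

definition ctrilin :: "(complex \<Rightarrow> 'a::ring_1) \<Rightarrow> (complex \<Rightarrow> 'b::ring_1) \<Rightarrow> (complex \<Rightarrow> 'c::ring_1)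
    \<Rightarrow> (complex \<Rightarrow> 'd::ring_1) \<Rightarrow> ('a \<Rightarrow> 'b \<Rightarrow> 'c \<Rightarrow> 'd) \<Rightarrow> bool" where
  "ctrilin \<iota>1 \<iota>2 \<iota>3 \<iota>4 f \<longleftrightarrow> (\<forall>y z. clin \<iota>1 \<iota>4 (\<lambda>x. f x y z)) \<and> (\<forall>x z. clin \<iota>2 \<iota>4 (\<lambda>y. f x y z))
      \<and> (\<forall>x y. clin \<iota>3 \<iota>4 (f x y))"

text \<open>Elements of tensor products are represented by finite lists of pure tensors
(sum of the pure tensors).  Two representatives denote the same tensor iff all complex
multilinear functionals agree on them (the algebraic dual separates points).\<close>
definition teq2 :: "(complex \<Rightarrow> 'a::ring_1) \<Rightarrow> (complex \<Rightarrow> 'b::ring_1)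
    \<Rightarrow> ('a \<times> 'b) list \<Rightarrow> ('a \<times> 'b) list \<Rightarrow> bool" where
  "teq2 \<iota>1 \<iota>2 X Y \<longleftrightarrow> (\<forall>\<phi> :: 'a \<Rightarrow> 'b \<Rightarrow> complex. cbilin \<iota>1 \<iota>2 (\<lambda>c. c) \<phi> \<longrightarrow>
      sum_list (map (\<lambda>(x, y). \<phi> x y) X) = sum_list (map (\<lambda>(x, y). \<phi> x y) Y))"

definition teq3 :: "(complex \<Rightarrow> 'a::ring_1) \<Rightarrow> (complex \<Rightarrow> 'b::ring_1) \<Rightarrow> (complex \<Rightarrow> 'c::ring_1)
    \<Rightarrow> ('a \<times> 'b \<times> 'c) list \<Rightarrow> ('a \<times> 'b \<times> 'c) list \<Rightarrow> bool" where
  "teq3 \<iota>1 \<iota>2 \<iota>3 X Y \<longleftrightarrow> (\<forall>\<phi> :: 'a \<Rightarrow> 'b \<Rightarrow> 'c \<Rightarrow> complex. ctrilin \<iota>1 \<iota>2 \<iota>3 (\<lambda>c. c) \<phi> \<longrightarrow>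
      sum_list (map (\<lambda>(x, y, z). \<phi> x y z) X) = sum_list (map (\<lambda>(x, y, z). \<phi> x y z) Y))"

text \<open>Hopf algebra over C on the ring M, with complex structure iota, coproduct Delta
(a representative of Delta(a) in M (x) M), counit eps and antipode S.\<close>
definition hopf_algebra :: "(complex \<Rightarrow> 'm::ring_1) \<Rightarrow> ('m \<Rightarrow> ('m \<times> 'm) list)
    \<Rightarrow> ('m \<Rightarrow> complex) \<Rightarrow> ('m \<Rightarrow> 'm) \<Rightarrow> bool" where
  "hopf_algebra \<iota> \<Delta> \<epsilon> S \<longleftrightarrow> calg \<iota>
   \<and> (\<forall>a b. teq2 \<iota> \<iota> (\<Delta> (a + b)) (\<Delta> a @ \<Delta> b))
   \<and> (\<forall>c a. teq2 \<iota> \<iota> (\<Delta> (\<iota> c * a)) (map (\<lambda>(x, y). (\<iota> c * x, y)) (\<Delta> a)))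
   \<and> (\<forall>a. teq3 \<iota> \<iota> \<iota>
          (concat (map (\<lambda>(x, y). map (\<lambda>(u, v). (u, v, y)) (\<Delta> x)) (\<Delta> a)))
          (concat (map (\<lambda>(x, y). map (\<lambda>(u, v). (x, u, v)) (\<Delta> y)) (\<Delta> a))))
   \<and> clin \<iota> (\<lambda>c. c) \<epsilon>
   \<and> (\<forall>a. sum_list (map (\<lambda>(x, y). \<iota> (\<epsilon> x) * y) (\<Delta> a)) = a
          \<and> sum_list (map (\<lambda>(x, y). x * \<iota> (\<epsilon> y)) (\<Delta> a)) = a)
   \<and> teq2 \<iota> \<iota> (\<Delta> 1) [(1, 1)]
   \<and> (\<forall>a b. teq2 \<iota> \<iota> (\<Delta> (a * b))
          (concat (map (\<lambda>(x, y). map (\<lambda>(u, v). (x * u, y * v)) (\<Delta> b)) (\<Delta> a))))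
   \<and> \<epsilon> 1 = 1 \<and> (\<forall>a b. \<epsilon> (a * b) = \<epsilon> a * \<epsilon> b)
   \<and> clin \<iota> \<iota> S
   \<and> (\<forall>a. sum_list (map (\<lambda>(x, y). S x * y) (\<Delta> a)) = \<iota> (\<epsilon> a)
          \<and> sum_list (map (\<lambda>(x, y). x * S y) (\<Delta> a)) = \<iota> (\<epsilon> a))"

definition cocommutative :: "(complex \<Rightarrow> 'm::ring_1) \<Rightarrow> ('m \<Rightarrow> ('m \<times> 'm) list) \<Rightarrow> bool" where
  "cocommutative \<iota> \<Delta> \<longleftrightarrow> (\<forall>a. teq2 \<iota> \<iota> (\<Delta> a) (map prod.swap (\<Delta> a)))"

text \<open>A-valued bicharacter r : M (x) M -> A, represented as a C-bilinear map.\<close>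
definition bicharacter :: "(complex \<Rightarrow> 'm::ring_1) \<Rightarrow> ('m \<Rightarrow> ('m \<times> 'm) list) \<Rightarrow> ('m \<Rightarrow> complex)
    \<Rightarrow> (complex \<Rightarrow> 'a::comm_ring_1) \<Rightarrow> ('m \<Rightarrow> 'm \<Rightarrow> 'a) \<Rightarrow> bool" where
  "bicharacter \<iota> \<Delta> \<epsilon> \<iota>A r \<longleftrightarrow> cbilin \<iota> \<iota> \<iota>A r
   \<and> (\<forall>a. r 1 a = \<iota>A (\<epsilon> a) \<and> r a 1 = \<iota>A (\<epsilon> a))
   \<and> (\<forall>a b c. r (a * b) c = sum_list (map (\<lambda>(x, y). r a x * r b y) (\<Delta> c)))
   \<and> (\<forall>a b c. r a (b * c) = sum_list (map (\<lambda>(x, y). r x b * r y c) (\<Delta> a)))"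

text \<open>Symmetrization s = r o r^t: s(a (x) b) = sum r(a' (x) b') r(b'' (x) a'').\<close>
definition symz :: "('m::ring_1 \<Rightarrow> ('m \<times> 'm) list) \<Rightarrow> ('m \<Rightarrow> 'm \<Rightarrow> 'a::comm_ring_1) \<Rightarrow> 'm \<Rightarrow> 'm \<Rightarrow> 'a" where
  "symz \<Delta> r a b = sum_list (concat (map (\<lambda>(x, y). map (\<lambda>(u, v). r x u * r v y) (\<Delta> b)) (\<Delta> a)))"

text \<open>EQ_r(m) = sum r(m' (x) m'') m''' in M_A = M (x) A, with Delta^2 = (id (x) Delta) Delta.\<close>
definition EQr :: "('m::ring_1 \<Rightarrow> ('m \<times> 'm) list) \<Rightarrow> ('m \<Rightarrow> 'm \<Rightarrow> 'a::comm_ring_1) \<Rightarrow> 'm \<Rightarrow> ('m \<times> 'a) list" where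
  "EQr \<Delta> r m = concat (map (\<lambda>(x, w). map (\<lambda>(y, z). (z, r x y)) (\<Delta> w)) (\<Delta> m))"

text \<open>The product bullet_t on M_A: A-bilinear extension of a bullet b = sum a'b' t(a'' (x) b'').\<close>
definition bullet :: "('m::ring_1 \<Rightarrow> ('m \<times> 'm) list) \<Rightarrow> ('m \<Rightarrow> 'm \<Rightarrow> 'a::comm_ring_1)
    \<Rightarrow> ('m \<times> 'a) list \<Rightarrow> ('m \<times> 'a) list \<Rightarrow> ('m \<times> 'a) list" where
  "bullet \<Delta> t X Y = concat (map (\<lambda>(a, \<alpha>). concat (map (\<lambda>(b, \<beta>).
      concat (map (\<lambda>(x, y). map (\<lambda>(u, v). (x * u, t y v * \<alpha> * \<beta>)) (\<Delta> b)) (\<Delta> a))) Y)) X)"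

end

theory Submission
  imports Defs
begin

lemma sum_list_swap:
  "sum_list (map (\<lambda>x. sum_list (map (\<lambda>y. f x y) B)) A)
   = sum_list (map (\<lambda>y. sum_list (map (\<lambda>x. f x y) A)) (B::'b list)) " for f :: "_ \<Rightarrow> _ \<Rightarrow> 'c::comm_monoid_add"
  by (induction A) (simp_all add: sum_list_addf)

lemma sum_list_add_map: "sum_list (map (\<lambda>x. f x + g x) A) = sum_list (map f A) + sum_list (map g A)"
  for f :: "_ \<Rightarrow> 'c::comm_monoid_add"
  by (induction A) (simp_all add: algebra_simps)

lemma sum_list_map_concat:
  "sum_list (map f (concat L)) = sum_list (map (\<lambda>l. sum_list (map f l)) L)"
  for f :: "_ \<Rightarrow> 'c::monoid_add"
  by (induction L) simp_all

definition ins :: "nat \<Rightarrow> 'm \<Rightarrow> 'm \<Rightarrow> 'm list \<Rightarrow> 'm list" where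
  "ins k u v t = take k t @ u # v # drop (Suc k) t"

definition swp :: "nat \<Rightarrow> 'm list \<Rightarrow> 'm list" where
  "swp k t = t[k := t ! Suc k, Suc k := t ! k]"

lemma sum_list_concat2: "sum_list (concat L) = sum_list (map sum_list L)"
  for L :: "'c::monoid_add list list"
  by (induction L) simp_all

locale hctx =
  fixes \<iota> :: "complex \<Rightarrow> 'm::ring_1" and \<Delta> :: "'m \<Rightarrow> ('m \<times> 'm) list"
    and \<epsilon> :: "'m \<Rightarrow> complex" and S :: "'m \<Rightarrow> 'm"
    and \<iota>A :: "complex \<Rightarrow> 'a::comm_ring_1" and r :: "'m \<Rightarrow> 'm \<Rightarrow> 'a"
  assumes hopf: "hopf_algebra \<iota> \<Delta> \<epsilon> S"
    and cocom: "cocommutative \<iota> \<Delta>"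
    and calgA: "calg \<iota>A"
    and bic: "bicharacter \<iota> \<Delta> \<epsilon> \<iota>A r"
begin

definition lin :: "('m \<Rightarrow> complex) \<Rightarrow> bool" where
  "lin f \<longleftrightarrow> (\<forall>x y. f (x + y) = f x + f y) \<and> (\<forall>c x. f (\<iota> c * x) = c * f x)"

definition Mlin :: "('m \<Rightarrow> 'm) \<Rightarrow> bool" where
  "Mlin f \<longleftrightarrow> (\<forall>x y. f (x + y) = f x + f y) \<and> (\<forall>c x. f (\<iota> c * x) = \<iota> c * f x)"

definition Alin :: "('m \<Rightarrow> 'a) \<Rightarrow> bool" where
  "Alin f \<longleftrightarrow> (\<forall>x y. f (x + y) = f x + f y) \<and> (\<forall>c x. f (\<iota> c * x) = \<iota>A c * f x)"

definition bil :: "('m \<Rightarrow> 'm \<Rightarrow> complex) \<Rightarrow> bool" where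
  "bil F \<longleftrightarrow> (\<forall>y. lin (\<lambda>x. F x y)) \<and> (\<forall>x. lin (F x))"

definition cop :: "('m \<Rightarrow> 'm \<Rightarrow> 'b::comm_monoid_add) \<Rightarrow> 'm \<Rightarrow> 'b" where
  "cop F a = sum_list (map (\<lambda>(x, y). F x y) (\<Delta> a))"

lemma calgM: "calg \<iota>" using hopf by (simp add: hopf_algebra_def)
lemma iota_comm: "\<iota> c * x = x * \<iota> c" using calgM by (simp add: calg_def)

lemma bil_cbilin: "cbilin \<iota> \<iota> (\<lambda>c. c) F \<longleftrightarrow> bil F"
  by (simp add: cbilin_def clin_def bil_def lin_def)

lemma tril_ctrilin: "ctrilin \<iota> \<iota> \<iota> (\<lambda>c. c) G \<longleftrightarrow>
   (\<forall>y z. lin (\<lambda>x. G x y z)) \<and> (\<forall>x z. lin (\<lambda>y. G x y z)) \<and> (\<forall>x y. lin (G x y))"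
  by (simp add: ctrilin_def clin_def lin_def)

lemma teq2_sum: "teq2 \<iota> \<iota> X Y \<Longrightarrow> bil F \<Longrightarrow>
  sum_list (map (\<lambda>(x, y). F x y) X) = sum_list (map (\<lambda>(x, y). F x y) Y)"
  unfolding teq2_def bil_cbilin[symmetric] by blast

lemma cop_lin: assumes "bil F" shows "lin (cop F)"
proof -
  have add: "teq2 \<iota> \<iota> (\<Delta> (a + b)) (\<Delta> a @ \<Delta> b)" for a b using hopf by (simp add: hopf_algebra_def)
  have sc: "teq2 \<iota> \<iota> (\<Delta> (\<iota> c * a)) (map (\<lambda>(x, y). (\<iota> c * x, y)) (\<Delta> a))" for c a
    using hopf by (simp add: hopf_algebra_def)
  have l1: "\<And>y. lin (\<lambda>x. F x y)" using assms by (simp add: bil_def)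
  show ?thesis unfolding lin_def cop_def
  proof (intro conjI allI)
    fix x y show "sum_list (map (\<lambda>(x, y). F x y) (\<Delta> (x + y))) =
        sum_list (map (\<lambda>(x, y). F x y) (\<Delta> x)) + sum_list (map (\<lambda>(x, y). F x y) (\<Delta> y))"
      using teq2_sum[OF add assms] by simp
  next
    fix c x
    have "sum_list (map (\<lambda>(x, y). F x y) (\<Delta> (\<iota> c * x))) =
       sum_list (map (\<lambda>(x, y). F x y) (map (\<lambda>(x, y). (\<iota> c * x, y)) (\<Delta> x)))"
      using teq2_sum[OF sc assms] by simp
    also have "\<dots> = sum_list (map (\<lambda>(x, y). c * F x y) (\<Delta> x))"
      using l1 by (simp add: lin_def o_def case_prod_unfold)
    also have "\<dots> = c * sum_list (map (\<lambda>(x, y). F x y) (\<Delta> x))"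
      by (simp add: sum_list_const_mult case_prod_unfold)
    finally show "sum_list (map (\<lambda>(x, y). F x y) (\<Delta> (\<iota> c * x))) = c * sum_list (map (\<lambda>(x, y). F x y) (\<Delta> x))" .
  qed
qed

lemma cop_coassoc:
  assumes "\<And>y z. lin (\<lambda>x. G x y z)" "\<And>x z. lin (\<lambda>y. G x y z)" "\<And>x y. lin (G x y)"
  shows "cop (\<lambda>x y. cop (\<lambda>u v. G u v y) x) a = cop (\<lambda>x y. cop (\<lambda>u v. G x u v) y) a"
proof -
  have "teq3 \<iota> \<iota> \<iota>
          (concat (map (\<lambda>(x, y). map (\<lambda>(u, v). (u, v, y)) (\<Delta> x)) (\<Delta> a)))
          (concat (map (\<lambda>(x, y). map (\<lambda>(u, v). (x, u, v)) (\<Delta> y)) (\<Delta> a)))"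
    using hopf by (simp add: hopf_algebra_def)
  moreover have "ctrilin \<iota> \<iota> \<iota> (\<lambda>c. c) G" using assms by (simp add: tril_ctrilin)
  ultimately have "sum_list (map (\<lambda>(x, y, z). G x y z) (concat (map (\<lambda>(x, y). map (\<lambda>(u, v). (u, v, y)) (\<Delta> x)) (\<Delta> a))))
    = sum_list (map (\<lambda>(x, y, z). G x y z) (concat (map (\<lambda>(x, y). map (\<lambda>(u, v). (x, u, v)) (\<Delta> y)) (\<Delta> a))))"
    unfolding teq3_def by blast
  then show ?thesis
    by (simp add: cop_def sum_list_map_concat o_def case_prod_unfold)
qed

lemma cop_cocomm: assumes "bil F" shows "cop F a = cop (\<lambda>x y. F y x) a"
proof -
  have "teq2 \<iota> \<iota> (\<Delta> a) (map prod.swap (\<Delta> a))" using cocom by (simp add: cocommutative_def)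
  from teq2_sum[OF this assms] show ?thesis by (simp add: cop_def o_def case_prod_unfold)
qed

lemma cop_mult: assumes "bil F"
  shows "cop F (a * b) = cop (\<lambda>x y. cop (\<lambda>u v. F (x * u) (y * v)) b) a"
proof -
  have "teq2 \<iota> \<iota> (\<Delta> (a * b))
          (concat (map (\<lambda>(x, y). map (\<lambda>(u, v). (x * u, y * v)) (\<Delta> b)) (\<Delta> a)))"
    using hopf by (simp add: hopf_algebra_def)
  from teq2_sum[OF this assms] show ?thesis
    by (simp add: cop_def sum_list_map_concat o_def case_prod_unfold)
qed

lemma cop_ex: "cop (\<lambda>x y. cop (G x y) c) a = cop (\<lambda>u v. cop (\<lambda>x y. G x y u v) a) c"
  unfolding cop_def case_prod_unfold by (rule sum_list_swap)

primrec D :: "nat \<Rightarrow> 'm \<Rightarrow> 'm list list" where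
  "D 0 a = [[a]]"
| "D (Suc n) a = concat (map (\<lambda>(x, y). map (\<lambda>t. x # t) (D n y)) (\<Delta> a))"

definition Sm :: "nat \<Rightarrow> ('m list \<Rightarrow> complex) \<Rightarrow> 'm \<Rightarrow> complex" where
  "Sm n F a = sum_list (map F (D n a))"

lemma Sm_0[simp]: "Sm 0 F a = F [a]" by (simp add: Sm_def)

lemma Sm_Suc: "Sm (Suc n) F a = cop (\<lambda>x y. Sm n (\<lambda>t. F (x # t)) y) a"
  by (simp add: Sm_def cop_def sum_list_map_concat o_def case_prod_unfold)

lemma D_len: "t \<in> set (D n a) \<Longrightarrow> length t = Suc n"
proof (induction n arbitrary: t a)
  case 0 then show ?case by simp
next
  case (Suc n)
  then obtain x y t' where "t' \<in> set (D n y)" "t = x # t'"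
    by (auto simp: case_prod_unfold)
  then show ?case using Suc.IH by simp
qed

lemma Sm_cong: "(\<And>t. length t = Suc n \<Longrightarrow> F t = G t) \<Longrightarrow> Sm n F a = Sm n G a"
  unfolding Sm_def by (rule arg_cong[where f=sum_list], rule map_cong[OF refl]) (blast dest: D_len)

lemma Sm_ex: "Sm n (\<lambda>t. cop (G t) c) a = cop (\<lambda>u v. Sm n (\<lambda>t. G t u v) a) c"
  unfolding cop_def Sm_def case_prod_unfold by (rule sum_list_swap)

lemma lin_sum_list:
  assumes "\<And>z. z \<in> set L \<Longrightarrow> lin (\<lambda>x. G x z)"
  shows "lin (\<lambda>x. sum_list (map (G x) L))"
  using assms
proof (induction L)
  case Nil then show ?case by (simp add: lin_def)
next
  case (Cons z L)
  then have a: "lin (\<lambda>x. G x z)" and b: "lin (\<lambda>x. sum_list (map (G x) L))" by auto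
  then show ?case by (simp add: lin_def algebra_simps)
qed

lemma Sm_lin_param: "(\<And>t. length t = Suc n \<Longrightarrow> lin (\<lambda>x. G x t)) \<Longrightarrow> lin (\<lambda>x. Sm n (G x) a)"
  unfolding Sm_def by (rule lin_sum_list) (auto dest: D_len)

lemma cop_lin_param: "(\<And>u v. lin (\<lambda>x. G x u v)) \<Longrightarrow> lin (\<lambda>x. cop (G x) a)"
  unfolding cop_def case_prod_unfold by (rule lin_sum_list) auto

definition mlin :: "nat \<Rightarrow> ('m list \<Rightarrow> complex) \<Rightarrow> bool" where
  "mlin n F \<longleftrightarrow> (\<forall>l j. length l = Suc n \<longrightarrow> j \<le> n \<longrightarrow> lin (\<lambda>x. F (l[j := x])))"

lemma mlinD: "mlin n F \<Longrightarrow> length l = Suc n \<Longrightarrow> j \<le> n \<Longrightarrow> lin (\<lambda>x. F (l[j := x]))"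
  by (simp add: mlin_def)

lemma mlin_Cons: "mlin (Suc n) F \<Longrightarrow> mlin n (\<lambda>t. F (x # t))"
  unfolding mlin_def
proof (intro allI impI)
  fix l :: "'m list" and j assume "\<forall>l j. length l = Suc (Suc n) \<longrightarrow> j \<le> Suc n \<longrightarrow> lin (\<lambda>x. F (l[j := x]))"
    "length l = Suc n" "j \<le> n"
  then have "lin (\<lambda>y. F ((x # l)[Suc j := y]))" by (metis Suc_le_mono length_Cons)
  then show "lin (\<lambda>y. F (x # l[j := y]))" by simp
qed

lemma mlin_pos0: "mlin (Suc n) F \<Longrightarrow> length t = Suc n \<Longrightarrow> lin (\<lambda>x. F (x # t))"
  using mlinD[of "Suc n" F "0 # t" 0] by simp

lemma Sm_lin: "mlin n F \<Longrightarrow> lin (Sm n F)"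
proof (induction n arbitrary: F)
  case 0
  then show ?case using mlinD[of 0 F "[0]" 0] by simp
next
  case (Suc n)
  have "bil (\<lambda>x y. Sm n (\<lambda>t. F (x # t)) y)"
    unfolding bil_def
    using Suc.IH[OF mlin_Cons[OF Suc.prems]] Sm_lin_param[of n "\<lambda>x t. F (x # t)"] mlin_pos0[OF Suc.prems]
    by auto
  then show ?case unfolding Sm_Suc by (rule cop_lin)
qed

lemma Sm_split:
  "mlin (Suc n) F \<Longrightarrow> k \<le> n \<Longrightarrow>
   Sm (Suc n) F a = Sm n (\<lambda>t. cop (\<lambda>u v. F (ins k u v t)) (t ! k)) a"
proof (induction n arbitrary: k F a)
  case 0
  then show ?case by (simp add: Sm_Suc ins_def)
next
  case (Suc m)
  show ?case
  proof (cases k)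
    case 0
    define G where "G x u v = Sm m (\<lambda>t. F (x # u # t)) v" for x u v
    have mF: "mlin m (\<lambda>t. F (x # u # t))" for x u
      using mlin_Cons[OF mlin_Cons[OF Suc.prems(1)]] .
    have l1: "lin (\<lambda>x. G x u v)" for u v unfolding G_def
      by (rule Sm_lin_param) (rule mlin_pos0[OF Suc.prems(1)], simp)
    have l2: "lin (\<lambda>u. G x u v)" for x v unfolding G_def
      by (rule Sm_lin_param) (rule mlin_pos0[OF mlin_Cons[OF Suc.prems(1)]], simp)
    have l3: "lin (G x u)" for x u unfolding G_def using Sm_lin[OF mF] .
    have "Sm (Suc (Suc m)) F a = cop (\<lambda>x y. cop (\<lambda>u v. G x u v) y) a"
      by (simp add: Sm_Suc G_def)
    also have "\<dots> = cop (\<lambda>x y. cop (\<lambda>u v. G u v y) x) a"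
      using cop_coassoc[of G, OF l1 l2 l3] by simp
    also have "\<dots> = Sm (Suc m) (\<lambda>t. cop (\<lambda>u v. F (ins k u v t)) (t ! k)) a"
      by (simp add: Sm_Suc G_def ins_def 0 Sm_ex)
    finally show ?thesis .
  next
    case (Suc k')
    with Suc.prems have k': "k' \<le> m" by simp
    have "Sm (Suc (Suc m)) F a = cop (\<lambda>x y. Sm (Suc m) (\<lambda>t. F (x # t)) y) a"
      by (simp add: Sm_Suc)
    also have "\<dots> = cop (\<lambda>x y. Sm m (\<lambda>t. cop (\<lambda>u v. F (x # ins k' u v t)) (t ! k')) y) a"
      using Suc.IH[OF mlin_Cons[OF Suc.prems(1)] k'] by simp
    also have "\<dots> = Sm (Suc m) (\<lambda>t. cop (\<lambda>u v. F (ins k u v t)) (t ! k)) a"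
      by (simp add: Sm_Suc ins_def Suc)
    finally show ?thesis .
  qed
qed

lemma Sm_mult:
  "mlin n F \<Longrightarrow> Sm n F (a * b) = Sm n (\<lambda>t. Sm n (\<lambda>s. F (map2 (*) t s)) b) a"
proof (induction n arbitrary: F a b)
  case 0
  then show ?case by simp
next
  case (Suc n)
  have bl: "bil (\<lambda>x y. Sm n (\<lambda>t. F (x # t)) y)"
    unfolding bil_def
    using Sm_lin[OF mlin_Cons[OF Suc.prems]] Sm_lin_param[of n "\<lambda>x t. F (x # t)"] mlin_pos0[OF Suc.prems]
    by auto
  have "Sm (Suc n) F (a * b) = cop (\<lambda>x y. Sm n (\<lambda>t. F (x # t)) y) (a * b)"
    by (simp add: Sm_Suc)
  also have "\<dots> = cop (\<lambda>x y. cop (\<lambda>u v. Sm n (\<lambda>t. F (x * u # t)) (y * v)) b) a"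
    by (rule cop_mult[OF bl])
  also have "\<dots> = cop (\<lambda>x y. cop (\<lambda>u v. Sm n (\<lambda>t. Sm n (\<lambda>s. F (x * u # map2 (*) t s)) v) y) b) a"
    using Suc.IH[OF mlin_Cons[OF Suc.prems]] by simp
  also have "\<dots> = cop (\<lambda>x y. Sm n (\<lambda>t. cop (\<lambda>u v. Sm n (\<lambda>s. F (x * u # map2 (*) t s)) v) b) y) a"
    by (simp only: Sm_ex)
  also have "\<dots> = Sm (Suc n) (\<lambda>t. Sm (Suc n) (\<lambda>s. F (map2 (*) t s)) b) a"
    by (simp add: Sm_Suc)
  finally show ?case .
qed

lemma swp_upd:
  assumes "length l = Suc n" "j \<le> n" "k < n"
  shows "swp k (l[j := x]) = (swp k l)[(if j = k then Suc k else if j = Suc k then k else j) := x]"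
proof (rule nth_equalityI)
  show "length (swp k (l[j := x])) = length ((swp k l)[(if j = k then Suc k else if j = Suc k then k else j) := x])"
    by (simp add: swp_def)
  fix i assume "i < length (swp k (l[j := x]))"
  then show "swp k (l[j := x]) ! i = (swp k l)[(if j = k then Suc k else if j = Suc k then k else j) := x] ! i"
    using assms by (simp add: swp_def nth_list_update)
qed

lemma mlin_swp: assumes "mlin n F" "k < n" shows "mlin n (\<lambda>t. F (swp k t))"
  unfolding mlin_def
proof (intro allI impI)
  fix l :: "'m list" and j assume l: "length l = Suc n" "j \<le> n"
  have "lin (\<lambda>x. F ((swp k l)[(if j = k then Suc k else if j = Suc k then k else j) := x]))"
    by (rule mlinD[OF assms(1)]) (use l assms(2) in \<open>auto simp: swp_def\<close>)
  then show "lin (\<lambda>x. F (swp k (l[j := x])))" using swp_upd[OF l assms(2)] by simp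
qed

lemma ins_swp: "length t = Suc n \<Longrightarrow> k \<le> n \<Longrightarrow> swp k (ins k u v t) = ins k v u t"
  unfolding swp_def ins_def
  by (simp add: nth_append list_update_append min_def)

lemma ins_upd1: "k \<le> length t \<Longrightarrow> ins k u v t = (ins k 0 v t)[k := u]"
  by (simp add: ins_def list_update_append)
lemma ins_upd2: "k \<le> length t \<Longrightarrow> ins k u v t = (ins k u 0 t)[Suc k := v]"
  by (simp add: ins_def list_update_append)
lemma ins_len: "k < length t \<Longrightarrow> length (ins k u v t) = Suc (length t)"
  by (simp add: ins_def)

lemma Sm_swap: assumes "mlin n F" "k < n"
  shows "Sm n F a = Sm n (\<lambda>t. F (swp k t)) a"
proof -
  obtain n' where n: "n = Suc n'" using assms(2) by (cases n) auto
  have k: "k \<le> n'" using assms(2) n by simp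
  have bl: "bil (\<lambda>u v. F (ins k u v t))" if "length t = Suc n'" for t
  proof -
    have "lin (\<lambda>x. F ((ins k 0 v t)[k := x]))" for v
      by (rule mlinD[OF assms(1)[unfolded n]]) (use that k in \<open>auto simp: ins_len\<close>)
    moreover have "lin (\<lambda>x. F ((ins k u 0 t)[Suc k := x]))" for u
      by (rule mlinD[OF assms(1)[unfolded n]]) (use that k in \<open>auto simp: ins_len\<close>)
    moreover have "(\<lambda>x. F (ins k x v t)) = (\<lambda>x. F ((ins k 0 v t)[k := x]))" for v
    proof (intro ext)
      fix x show "F (ins k x v t) = F ((ins k 0 v t)[k := x])" using ins_upd1[of k t x v] that k by simp
    qed
    moreover have "(\<lambda>x. F (ins k u x t)) = (\<lambda>x. F ((ins k u 0 t)[Suc k := x]))" for u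
    proof (intro ext)
      fix x show "F (ins k u x t) = F ((ins k u 0 t)[Suc k := x])" using ins_upd2[of k t u x] that k by simp
    qed
    ultimately show ?thesis unfolding bil_def by metis
  qed
  have "Sm n F a = Sm n' (\<lambda>t. cop (\<lambda>u v. F (ins k u v t)) (t ! k)) a"
    unfolding n by (rule Sm_split[OF assms(1)[unfolded n] k])
  also have "\<dots> = Sm n' (\<lambda>t. cop (\<lambda>u v. F (ins k v u t)) (t ! k)) a"
    by (rule Sm_cong) (use bl cop_cocomm in blast)
  also have "\<dots> = Sm n' (\<lambda>t. cop (\<lambda>u v. F (swp k (ins k u v t))) (t ! k)) a"
    by (rule Sm_cong) (simp add: ins_swp k)
  also have "\<dots> = Sm n (\<lambda>t. F (swp k t)) a"
    unfolding n by (rule Sm_split[symmetric, OF mlin_swp[OF assms(1), unfolded n] k]) (use assms n in simp)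
  finally show ?thesis .
qed

lemma Sm_perm: "mlin n F \<Longrightarrow> \<forall>k\<in>set ks. k < n \<Longrightarrow> Sm n F a = Sm n (\<lambda>t. F (foldr swp ks t)) a"
proof (induction ks arbitrary: F)
  case Nil then show ?case by simp
next
  case (Cons k ks)
  have "Sm n F a = Sm n (\<lambda>t. F (swp k t)) a" using Sm_swap Cons.prems by simp
  also have "\<dots> = Sm n (\<lambda>t. F (swp k (foldr swp ks t))) a"
    using Cons.IH[of "\<lambda>t. F (swp k t)"] mlin_swp Cons.prems by simp
  finally show ?case by simp
qed

lemma bil_ins: assumes "mlin (Suc n) F" "length t = Suc n" "k \<le> n"
  shows "bil (\<lambda>u v. F (ins k u v t))"
proof -
  have "lin (\<lambda>x. F ((ins k 0 v t)[k := x]))" for v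
    by (rule mlinD[OF assms(1)]) (use assms in \<open>auto simp: ins_len\<close>)
  moreover have "lin (\<lambda>x. F ((ins k u 0 t)[Suc k := x]))" for u
    by (rule mlinD[OF assms(1)]) (use assms in \<open>auto simp: ins_len\<close>)
  moreover have "(\<lambda>x. F (ins k x v t)) = (\<lambda>x. F ((ins k 0 v t)[k := x]))" for v
  proof (intro ext)
    fix x show "F (ins k x v t) = F ((ins k 0 v t)[k := x])" using ins_upd1[of k t x v] assms by simp
  qed
  moreover have "(\<lambda>x. F (ins k u x t)) = (\<lambda>x. F ((ins k u 0 t)[Suc k := x]))" for u
  proof (intro ext)
    fix x show "F (ins k u x t) = F ((ins k u 0 t)[Suc k := x])" using ins_upd2[of k t u x] assms by simp
  qed
  ultimately show ?thesis unfolding bil_def by metis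
qed

lemma ins_upd_eq: "k < length l \<Longrightarrow> ins k u v (l[k := x]) = ins k u v l"
  by (simp add: ins_def)
lemma ins_upd_lt: "j < k \<Longrightarrow> k < length l \<Longrightarrow> ins k u v (l[j := x]) = (ins k u v l)[j := x]"
  by (simp add: ins_def list_update_append take_update_swap)
lemma ins_upd_gt: "k < j \<Longrightarrow> j < length l \<Longrightarrow> ins k u v (l[j := x]) = (ins k u v l)[Suc j := x]"
proof -
  assume a: "k < j" "j < length l"
  then obtain d where d: "j = Suc k + d" by (metis less_imp_Suc_add add_Suc)
  show ?thesis using a unfolding d by (simp add: ins_def drop_update_swap list_update_append min_def)
qed
lemma mlin_split: assumes "mlin (Suc n) G" "k \<le> n"
  shows "mlin n (\<lambda>t. cop (\<lambda>u v. G (ins k u v t)) (t ! k))"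
  unfolding mlin_def
proof (intro allI impI)
  fix l :: "'m list" and j assume l: "length l = Suc n" "j \<le> n"
  consider "j = k" | "j < k" | "k < j" by arith
  then show "lin (\<lambda>x. cop (\<lambda>u v. G (ins k u v (l[j := x]))) (l[j := x] ! k))"
  proof cases
    case 1
    have "lin (cop (\<lambda>u v. G (ins k u v l)))" by (rule cop_lin, rule bil_ins) (use assms l in auto)
    then show ?thesis using 1 l assms by (simp add: ins_upd_eq)
  next
    case 2
    have "lin (\<lambda>x. cop (\<lambda>u v. G ((ins k u v l)[j := x])) (l ! k))"
      by (rule cop_lin_param, rule mlinD[OF assms(1)]) (use l assms 2 in \<open>auto simp: ins_len\<close>)
    then show ?thesis using 2 l assms by (simp add: ins_upd_lt)
  next
    case 3
    have "lin (\<lambda>x. cop (\<lambda>u v. G ((ins k u v l)[Suc j := x])) (l ! k))"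
      by (rule cop_lin_param, rule mlinD[OF assms(1)]) (use l assms 3 in \<open>auto simp: ins_len\<close>)
    then show ?thesis using 3 l assms by (simp add: ins_upd_gt)
  qed
qed

lemma mlin_Sm_param: "(\<And>s. mlin n (\<lambda>t. G t s)) \<Longrightarrow> mlin n (\<lambda>t. Sm m (G t) b)"
  unfolding mlin_def by (auto intro!: Sm_lin_param)

lemma len3: "length t = 3 \<Longrightarrow> \<exists>a b c. t = [a, b, c]"
  by (cases t; cases "tl t"; cases "tl (tl t)") auto

lemma len5: "length t = 5 \<Longrightarrow> \<exists>a b c d e. t = [a, b, c, d, e]"
  by (cases t; cases "tl t"; cases "tl (tl t)"; cases "tl (tl (tl t))"; cases "tl (tl (tl (tl t)))") auto

lemma splitB: assumes "mlin 4 G"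
  shows "Sm 4 G a = Sm 2 (\<lambda>t. cop (\<lambda>x y. cop (\<lambda>p q. G [p, q, x, y, t ! 2]) (t ! 0)) (t ! 1)) a"
proof -
  have m: "mlin (Suc 3) G" using assms by (simp add: numeral_eq_Suc)
  define H where "H t = cop (\<lambda>u v. G (ins 2 u v t)) (t ! 2)" for t
  have mH: "mlin (Suc 2) H" unfolding H_def using mlin_split[OF m, of 2] by (simp add: numeral_eq_Suc)
  have "Sm 4 G a = Sm (Suc 3) G a" by (simp add: numeral_eq_Suc)
  also have "\<dots> = Sm 3 H a" unfolding H_def by (rule Sm_split[OF m]) simp
  also have "\<dots> = Sm (Suc 2) H a" by (simp add: numeral_eq_Suc)
  also have "\<dots> = Sm 2 (\<lambda>t. cop (\<lambda>u v. H (ins 0 u v t)) (t ! 0)) a" by (rule Sm_split[OF mH]) simp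
  also have "\<dots> = Sm 2 (\<lambda>t. cop (\<lambda>p q. cop (\<lambda>x y. G [p, q, x, y, t ! 2]) (t ! 1)) (t ! 0)) a"
  proof (rule Sm_cong)
    fix t :: "'m list" assume "length t = Suc 2"
    then obtain t0 t1 t2 where "t = [t0, t1, t2]" using len3[of t] by auto
    then show "cop (\<lambda>u v. H (ins 0 u v t)) (t ! 0) = cop (\<lambda>p q. cop (\<lambda>x y. G [p, q, x, y, t ! 2]) (t ! 1)) (t ! 0)"
      by (simp add: H_def ins_def)
  qed
  also have "\<dots> = Sm 2 (\<lambda>t. cop (\<lambda>x y. cop (\<lambda>p q. G [p, q, x, y, t ! 2]) (t ! 0)) (t ! 1)) a"
    by (rule Sm_cong) (rule cop_ex)
  finally show ?thesis .
qed

lemma splitC: assumes "mlin 4 G"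
  shows "Sm 4 G a = Sm 2 (\<lambda>t. cop (\<lambda>x y. cop (\<lambda>p q. G [t ! 0, t ! 1, x, p, q]) y) (t ! 2)) a"
proof -
  have m: "mlin (Suc 3) G" using assms by (simp add: numeral_eq_Suc)
  define H where "H t = cop (\<lambda>u v. G (ins 3 u v t)) (t ! 3)" for t
  have mH: "mlin (Suc 2) H" unfolding H_def using mlin_split[OF m, of 3] by (simp add: numeral_eq_Suc)
  have "Sm 4 G a = Sm (Suc 3) G a" by (simp add: numeral_eq_Suc)
  also have "\<dots> = Sm 3 H a" unfolding H_def by (rule Sm_split[OF m]) simp
  also have "\<dots> = Sm (Suc 2) H a" by (simp add: numeral_eq_Suc)
  also have "\<dots> = Sm 2 (\<lambda>t. cop (\<lambda>u v. H (ins 2 u v t)) (t ! 2)) a" by (rule Sm_split[OF mH]) simp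
  also have "\<dots> = Sm 2 (\<lambda>t. cop (\<lambda>x y. cop (\<lambda>p q. G [t ! 0, t ! 1, x, p, q]) y) (t ! 2)) a"
  proof (rule Sm_cong)
    fix t :: "'m list" assume "length t = Suc 2"
    then obtain t0 t1 t2 where "t = [t0, t1, t2]" using len3[of t] by auto
    then show "cop (\<lambda>u v. H (ins 2 u v t)) (t ! 2) = cop (\<lambda>x y. cop (\<lambda>p q. G [t ! 0, t ! 1, x, p, q]) y) (t ! 2)"
      by (simp add: H_def ins_def numeral_eq_Suc)
  qed
  finally show ?thesis .
qed

end

locale pctx = hctx \<iota> \<Delta> \<epsilon> S \<iota>A r
  for \<iota> :: "complex \<Rightarrow> 'm::ring_1" and \<Delta> :: "'m \<Rightarrow> ('m \<times> 'm) list"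
    and \<epsilon> :: "'m \<Rightarrow> complex" and S :: "'m \<Rightarrow> 'm"
    and \<iota>A :: "complex \<Rightarrow> 'a::comm_ring_1" and r :: "'m \<Rightarrow> 'm \<Rightarrow> 'a" +
  fixes \<phi> :: "'m \<Rightarrow> 'a \<Rightarrow> complex"
  assumes phib: "cbilin \<iota> \<iota>A (\<lambda>c. c) \<phi>"
begin

lemma phi_add1: "\<phi> (x + y) \<alpha> = \<phi> x \<alpha> + \<phi> y \<alpha>" using phib by (simp add: cbilin_def clin_def)
lemma phi_sc1: "\<phi> (\<iota> c * x) \<alpha> = c * \<phi> x \<alpha>" using phib by (simp add: cbilin_def clin_def)
lemma phi_add2: "\<phi> m (\<alpha> + \<beta>) = \<phi> m \<alpha> + \<phi> m \<beta>" using phib by (simp add: cbilin_def clin_def)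
lemma phi_sc2: "\<phi> m (\<iota>A c * \<alpha>) = c * \<phi> m \<alpha>" using phib by (simp add: cbilin_def clin_def)
lemma phi_0: "\<phi> m 0 = 0" using phi_add2[of m 0 0] by simp

lemma phi_sum: "\<phi> m (sum_list (map f L)) = sum_list (map (\<lambda>z. \<phi> m (f z)) L)"
  by (induction L) (simp_all add: phi_0 phi_add2)

lemma phi_cop: "\<phi> m (cop F c) = cop (\<lambda>x y. \<phi> m (F x y)) c"
  by (simp add: cop_def phi_sum case_prod_unfold)

lemma cop_mult_const: "cop F c * (\<beta>::'a) = cop (\<lambda>x y. F x y * \<beta>) c"
  by (simp add: cop_def sum_list_mult_const case_prod_unfold)
lemma const_mult_cop: "(\<beta>::'a) * cop F c = cop (\<lambda>x y. \<beta> * F x y) c"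
  by (simp add: cop_def sum_list_const_mult case_prod_unfold)

lemma r_add1: "r (x + y) z = r x z + r y z" using bic unfolding bicharacter_def cbilin_def clin_def by blast
lemma r_sc1: "r (\<iota> c * x) z = \<iota>A c * r x z" using bic unfolding bicharacter_def cbilin_def clin_def by blast
lemma r_add2: "r z (x + y) = r z x + r z y" using bic unfolding bicharacter_def cbilin_def clin_def by blast
lemma r_sc2: "r z (\<iota> c * x) = \<iota>A c * r z x" using bic unfolding bicharacter_def cbilin_def clin_def by blast
lemma r_mult1: "r (a * b) c = cop (\<lambda>x y. r a x * r b y) c"
  using bic by (simp add: bicharacter_def cop_def case_prod_unfold)
lemma r_mult2: "r a (b * c) = cop (\<lambda>x y. r x b * r y c) a"
  using bic by (simp add: bicharacter_def cop_def case_prod_unfold)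

lemma lin_phiM: "Mlin f \<Longrightarrow> lin (\<lambda>x. \<phi> (f x) \<alpha>)"
  by (simp add: Mlin_def lin_def phi_add1 phi_sc1)
lemma lin_phiA: "Alin g \<Longrightarrow> lin (\<lambda>x. \<phi> m (g x))"
  by (simp add: Alin_def lin_def phi_add2 phi_sc2)
lemma Mlin_id: "Mlin (\<lambda>x. x)" by (simp add: Mlin_def)
lemma Mlin_mr: "Mlin (\<lambda>x. x * c)" by (simp add: Mlin_def algebra_simps)
lemma Mlin_ml: "Mlin (\<lambda>x. c * x)"
  by (simp add: Mlin_def algebra_simps) (metis iota_comm mult.assoc)
lemma Alin_r1: "Alin (\<lambda>x. r x y)" by (simp add: Alin_def r_add1 r_sc1)
lemma Alin_r2: "Alin (\<lambda>x. r y x)" by (simp add: Alin_def r_add2 r_sc2)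
lemma Alin_mr: "Alin g \<Longrightarrow> Alin (\<lambda>x. g x * \<beta>)" by (simp add: Alin_def algebra_simps)
lemma Alin_ml: "Alin g \<Longrightarrow> Alin (\<lambda>x. \<beta> * g x)" by (simp add: Alin_def algebra_simps)

lemmas linI = lin_phiM lin_phiA Mlin_id Mlin_mr Mlin_ml Alin_r1 Alin_r2 Alin_mr Alin_ml

lemma mlin4I:
  assumes "\<And>l. length l = 5 \<Longrightarrow> lin (\<lambda>x. F (l[0 := x]))"
    "\<And>l. length l = 5 \<Longrightarrow> lin (\<lambda>x. F (l[1 := x]))"
    "\<And>l. length l = 5 \<Longrightarrow> lin (\<lambda>x. F (l[2 := x]))"
    "\<And>l. length l = 5 \<Longrightarrow> lin (\<lambda>x. F (l[3 := x]))"
    "\<And>l. length l = 5 \<Longrightarrow> lin (\<lambda>x. F (l[4 := x]))"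
  shows "mlin 4 F"
  unfolding mlin_def
proof (intro allI impI)
  fix l :: "'m list" and j :: nat assume "length l = Suc 4" "j \<le> 4"
  then have l: "length l = 5" and "j = 0 \<or> j = 1 \<or> j = 2 \<or> j = 3 \<or> j = 4" by auto
  then show "lin (\<lambda>x. F (l[j := x]))" using assms by auto
qed

lemma mlin2I:
  assumes "\<And>l. length l = 3 \<Longrightarrow> lin (\<lambda>x. F (l[0 := x]))"
    "\<And>l. length l = 3 \<Longrightarrow> lin (\<lambda>x. F (l[1 := x]))"
    "\<And>l. length l = 3 \<Longrightarrow> lin (\<lambda>x. F (l[2 := x]))"
  shows "mlin 2 F"
  unfolding mlin_def
proof (intro allI impI)
  fix l :: "'m list" and j :: nat assume "length l = Suc 2" "j \<le> 2"
  then have l: "length l = 3" and "j = 0 \<or> j = 1 \<or> j = 2" by auto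
  then show "lin (\<lambda>x. F (l[j := x]))" using assms by auto
qed

definition FL :: "'m list \<Rightarrow> 'm list \<Rightarrow> complex" where
  "FL t s = \<phi> (t!4 * s!4) (r (t!0) (t!2) * r (t!1) (s!2) * r (s!0) (t!3) * r (s!1) (s!3))"
definition FR :: "'m list \<Rightarrow> 'm list \<Rightarrow> complex" where
  "FR t s = \<phi> (t!2 * s!2) (r (t!3) (s!3) * r (s!4) (t!4) * r (t!0) (t!1) * r (s!0) (s!1))"

lemma mlin_FL1: "mlin 4 (\<lambda>t. FL t s)"
  by (rule mlin4I) (simp_all add: FL_def nth_list_update, (intro linI)+)
lemma mlin_FL2: "mlin 4 (FL t)"
  by (rule mlin4I) (simp_all add: FL_def nth_list_update, (intro linI)+)
lemma mlin_FR1: "mlin 4 (\<lambda>t. FR t s)"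
  by (rule mlin4I) (simp_all add: FR_def nth_list_update, (intro linI)+)
lemma mlin_FR2: "mlin 4 (FR t)"
  by (rule mlin4I) (simp_all add: FR_def nth_list_update, (intro linI)+)
lemma mlin_F0: "mlin 2 (\<lambda>t. \<phi> (t!2) (r (t!0) (t!1)))"
  by (rule mlin2I) (simp_all add: nth_list_update, (intro linI)+)


lemma PL: "\<phi> (t2 * s2) (r (t0 * s0) (t1 * s1)) =
  cop (\<lambda>x y. cop (\<lambda>p q. cop (\<lambda>u v. cop (\<lambda>p' q'.
     \<phi> (t2 * s2) (r p x * r q u * (r p' y * r q' v))) s0) s1) t0) t1"
proof -
  have bl: "bil (\<lambda>x y. \<phi> (t2 * s2) (r t0 x * r s0 y))"
    unfolding bil_def by (intro allI conjI linI)
  have "\<phi> (t2 * s2) (r (t0 * s0) (t1 * s1)) = cop (\<lambda>x y. \<phi> (t2 * s2) (r t0 x * r s0 y)) (t1 * s1)"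
    by (simp only: r_mult1 phi_cop)
  also have "\<dots> = cop (\<lambda>x y. cop (\<lambda>u v. \<phi> (t2 * s2) (r t0 (x * u) * r s0 (y * v))) s1) t1"
    by (rule cop_mult[OF bl])
  also have "\<dots> = cop (\<lambda>x y. cop (\<lambda>u v. \<phi> (t2 * s2) (cop (\<lambda>p q. r p x * r q u * cop (\<lambda>p' q'. r p' y * r q' v) s0) t0)) s1) t1"
    by (simp only: r_mult2 cop_mult_const)
  also have "\<dots> = cop (\<lambda>x y. cop (\<lambda>u v. cop (\<lambda>p q. cop (\<lambda>p' q'.
     \<phi> (t2 * s2) (r p x * r q u * (r p' y * r q' v))) s0) t0) s1) t1"
    by (simp only: const_mult_cop phi_cop)
  also have "\<dots> = cop (\<lambda>x y. cop (\<lambda>p q. cop (\<lambda>u v. cop (\<lambda>p' q'.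
     \<phi> (t2 * s2) (r p x * r q u * (r p' y * r q' v))) s0) s1) t0) t1"
    by (rule arg_cong[where f="\<lambda>F. cop F t1"], intro ext, rule cop_ex)
  finally show ?thesis .
qed

lemma symz_cop: "symz \<Delta> r y v = cop (\<lambda>p q. cop (\<lambda>p' q'. r p p' * r q' q) v) y"
  by (simp add: symz_def cop_def sum_list_concat2 o_def case_prod_unfold)

lemma RPL: "cop (\<lambda>x y. cop (\<lambda>u v. \<phi> (x * u) (symz \<Delta> r y v * \<alpha> * \<beta>)) Y) X =
  cop (\<lambda>x y. cop (\<lambda>p q. cop (\<lambda>u v. cop (\<lambda>p' q'. \<phi> (x * u) (r p p' * r q' q * \<alpha> * \<beta>)) v) Y) y) X"
proof -
  have "cop (\<lambda>x y. cop (\<lambda>u v. \<phi> (x * u) (symz \<Delta> r y v * \<alpha> * \<beta>)) Y) X =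
    cop (\<lambda>x y. cop (\<lambda>u v. cop (\<lambda>p q. cop (\<lambda>p' q'. \<phi> (x * u) (r p p' * r q' q * \<alpha> * \<beta>)) v) y) Y) X"
    by (simp only: symz_cop cop_mult_const phi_cop)
  also have "\<dots> = cop (\<lambda>x y. cop (\<lambda>p q. cop (\<lambda>u v. cop (\<lambda>p' q'. \<phi> (x * u) (r p p' * r q' q * \<alpha> * \<beta>)) v) Y) y) X"
    by (rule arg_cong[where f="\<lambda>F. cop F X"], intro ext, rule cop_ex)
  finally show ?thesis .
qed

lemma EQr_sum: "sum_list (map (\<lambda>(x, y). g x y) (EQr \<Delta> r m)) = Sm 2 (\<lambda>t. g (t!2) (r (t!0) (t!1))) m"
  by (simp add: EQr_def numeral_eq_Suc Sm_Suc cop_def sum_list_map_concat o_def case_prod_unfold)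

lemma bullet_sum: "sum_list (map (\<lambda>(x, y). \<phi> x y) (bullet \<Delta> tt X Y)) =
  sum_list (map (\<lambda>(p, \<alpha>). sum_list (map (\<lambda>(q, \<beta>). cop (\<lambda>x y. cop (\<lambda>u v. \<phi> (x * u) (tt y v * \<alpha> * \<beta>)) q) p) Y)) X)"
  by (simp add: bullet_def cop_def sum_list_map_concat o_def case_prod_unfold)


lemma perm_step: "Sm 4 (\<lambda>T. Sm 4 (FL T) b) a = Sm 4 (\<lambda>T. Sm 4 (FR T) b) a"
proof -
  have A: "Sm 4 (FL T) b = Sm 4 (\<lambda>S. FL T (foldr swp [0,1,2,1,3,2] S)) b" for T
    by (rule Sm_perm[OF mlin_FL2]) simp
  have "Sm 4 (\<lambda>T. Sm 4 (FL T) b) a = Sm 4 (\<lambda>T. Sm 4 (\<lambda>S. FL T (foldr swp [0,1,2,1,3,2] S)) b) a"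
    by (simp only: A)
  also have "\<dots> = Sm 4 (\<lambda>T. Sm 4 (\<lambda>S. FL (foldr swp [1,3,2] T) (foldr swp [0,1,2,1,3,2] S)) b) a"
    by (rule Sm_perm[OF mlin_Sm_param[OF mlin_FL1]]) simp
  also have "\<dots> = Sm 4 (\<lambda>T. Sm 4 (FR T) b) a"
  proof (rule Sm_cong, rule Sm_cong)
    fix T S :: "'m list" assume "length T = Suc 4" "length S = Suc 4"
    then obtain t0 t1 t2 t3 t4 s0 s1 s2 s3 s4 where "T = [t0,t1,t2,t3,t4]" "S = [s0,s1,s2,s3,s4]"
      using len5[of T] len5[of S] by auto
    then show "FL (foldr swp [1,3,2] T) (foldr swp [0,1,2,1,3,2] S) = FR T S"
      by (simp add: swp_def FL_def FR_def ac_simps)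
  qed
  finally show ?thesis .
qed

lemma mainL: "sum_list (map (\<lambda>(x, y). \<phi> x y) (EQr \<Delta> r (a * b))) = Sm 4 (\<lambda>T. Sm 4 (FL T) b) a"
proof -
  have "sum_list (map (\<lambda>(x, y). \<phi> x y) (EQr \<Delta> r (a * b))) = Sm 2 (\<lambda>t. \<phi> (t!2) (r (t!0) (t!1))) (a * b)"
    by (rule EQr_sum)
  also have "\<dots> = Sm 2 (\<lambda>t. Sm 2 (\<lambda>s. \<phi> (map2 (*) t s ! 2) (r (map2 (*) t s ! 0) (map2 (*) t s ! 1))) b) a"
    by (rule Sm_mult[OF mlin_F0])
  also have "\<dots> = Sm 2 (\<lambda>t. Sm 2 (\<lambda>s. cop (\<lambda>x y. cop (\<lambda>p q. cop (\<lambda>u v. cop (\<lambda>p' q'.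
     \<phi> (t!2 * s!2) (r p x * r q u * (r p' y * r q' v))) (s!0)) (s!1)) (t!0)) (t!1)) b) a"
  proof (rule Sm_cong, rule Sm_cong)
    fix t s :: "'m list" assume "length t = Suc 2" "length s = Suc 2"
    then obtain t0 t1 t2 s0 s1 s2 where "t = [t0,t1,t2]" "s = [s0,s1,s2]"
      using len3[of t] len3[of s] by auto
    then show "\<phi> (map2 (*) t s ! 2) (r (map2 (*) t s ! 0) (map2 (*) t s ! 1)) =
      cop (\<lambda>x y. cop (\<lambda>p q. cop (\<lambda>u v. cop (\<lambda>p' q'.
     \<phi> (t!2 * s!2) (r p x * r q u * (r p' y * r q' v))) (s!0)) (s!1)) (t!0)) (t!1)"
      by (simp add: PL)
  qed
  also have "\<dots> = Sm 2 (\<lambda>t. cop (\<lambda>x y. cop (\<lambda>p q. Sm 2 (\<lambda>s. cop (\<lambda>u v. cop (\<lambda>p' q'.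
     \<phi> (t!2 * s!2) (r p x * r q u * (r p' y * r q' v))) (s!0)) (s!1)) b) (t!0)) (t!1)) a"
    by (simp only: Sm_ex)
  also have "\<dots> = Sm 2 (\<lambda>t. cop (\<lambda>x y. cop (\<lambda>p q. Sm 4 (FL [p, q, x, y, t ! 2]) b) (t ! 0)) (t ! 1)) a"
    by (simp add: splitB[OF mlin_FL2] FL_def mult.assoc)
  also have "\<dots> = Sm 4 (\<lambda>T. Sm 4 (FL T) b) a"
    by (rule splitB[symmetric, OF mlin_Sm_param[OF mlin_FL1]])
  finally show ?thesis .
qed

lemma mainR: "sum_list (map (\<lambda>(x, y). \<phi> x y) (bullet \<Delta> (symz \<Delta> r) (EQr \<Delta> r a) (EQr \<Delta> r b)))
   = Sm 4 (\<lambda>T. Sm 4 (FR T) b) a"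
proof -
  have "sum_list (map (\<lambda>(x, y). \<phi> x y) (bullet \<Delta> (symz \<Delta> r) (EQr \<Delta> r a) (EQr \<Delta> r b)))
   = Sm 2 (\<lambda>t. Sm 2 (\<lambda>s. cop (\<lambda>x y. cop (\<lambda>u v. \<phi> (x * u) (symz \<Delta> r y v * r (t!0) (t!1) * r (s!0) (s!1))) (s!2)) (t!2)) b) a"
    by (simp add: bullet_sum EQr_sum)
  also have "\<dots> = Sm 2 (\<lambda>t. Sm 2 (\<lambda>s. cop (\<lambda>x y. cop (\<lambda>p q. cop (\<lambda>u v. cop (\<lambda>p' q'.
      \<phi> (x * u) (r p p' * r q' q * r (t!0) (t!1) * r (s!0) (s!1))) v) (s!2)) y) (t!2)) b) a"
    by (simp only: RPL)
  also have "\<dots> = Sm 2 (\<lambda>t. cop (\<lambda>x y. cop (\<lambda>p q. Sm 2 (\<lambda>s. cop (\<lambda>u v. cop (\<lambda>p' q'.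
      \<phi> (x * u) (r p p' * r q' q * r (t!0) (t!1) * r (s!0) (s!1))) v) (s!2)) b) y) (t!2)) a"
    by (simp only: Sm_ex)
  also have "\<dots> = Sm 2 (\<lambda>t. cop (\<lambda>x y. cop (\<lambda>p q. Sm 4 (FR [t ! 0, t ! 1, x, p, q]) b) y) (t ! 2)) a"
    by (simp add: splitC[OF mlin_FR2] FR_def)
  also have "\<dots> = Sm 4 (\<lambda>T. Sm 4 (FR T) b) a"
    by (rule splitC[symmetric, OF mlin_Sm_param[OF mlin_FR1]])
  finally show ?thesis .
qed


end

theorem lemma2p6:
  fixes \<iota> :: "complex \<Rightarrow> 'm::ring_1" and \<Delta> :: "'m \<Rightarrow> ('m \<times> 'm) list"
    and \<epsilon> :: "'m \<Rightarrow> complex" and S :: "'m \<Rightarrow> 'm"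
    and \<iota>A :: "complex \<Rightarrow> 'a::comm_ring_1" and r :: "'m \<Rightarrow> 'm \<Rightarrow> 'a"
    and a b :: 'm
  assumes "hopf_algebra \<iota> \<Delta> \<epsilon> S"
    and "\<forall>x y :: 'm. x * y = y * x"
    and "cocommutative \<iota> \<Delta>"
    and "calg \<iota>A"
    and "bicharacter \<iota> \<Delta> \<epsilon> \<iota>A r"
  shows "teq2 \<iota> \<iota>A (EQr \<Delta> r (a * b)) (bullet \<Delta> (symz \<Delta> r) (EQr \<Delta> r a) (EQr \<Delta> r b))"
  unfolding teq2_def
proof (intro allI impI)
  fix \<phi> :: "'m \<Rightarrow> 'a \<Rightarrow> complex"
  assume ph: "cbilin \<iota> \<iota>A (\<lambda>c. c) \<phi>"
  interpret pctx \<iota> \<Delta> \<epsilon> S \<iota>A r \<phi>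
    using assms ph by unfold_locales auto
  show "sum_list (map (\<lambda>(x, y). \<phi> x y) (EQr \<Delta> r (a * b))) =
    sum_list (map (\<lambda>(x, y). \<phi> x y) (bullet \<Delta> (symz \<Delta> r) (EQr \<Delta> r a) (EQr \<Delta> r b)))"
    using mainL mainR perm_step by simp
qed

end
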